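(* Let $c\ge 0$, $n\in\mathbb{R}$ with $n>c$, and $\rho\in\mathbb{N}$. Define for $t\in[0,\infty)$ $$\omega_{n,j,\rho}(t)=\begin{cases}\displaystyle\int_t^\infty \mu_{n,1,\rho}(u)\,du, & j=0,\\[2mm] \displaystyle\int_0^t\big(\mu_{n,j,\rho}(u)-\mu_{n,j+1,\rho}(u)\big)\,du, & j\in\mathbb{N}.\end{cases}$$ Then for every $j\in\mathbb{N}_0$ and every $t\in[0,\infty)$, $$\omega_{n,j,\rho}(t)=\sum_{i=0}^{\rho-1}p_{n\rho+c,\,i+j\rho}(t).$$
   Context: Notation: for $c\in\mathbb{R}$, $a\in\mathbb{R}$ and $j\in\mathbb{N}$, $a^{c,\overline{j}}=\prod_{l=0}^{j-1}(a+cl)$ and $a^{c,\underline{j}}=\prod_{l=0}^{j-1}(a-cl)$, with $a^{c,\overline{0}}=a^{c,\underline{0}}=1$. Fix $c\ge0$. For real $m$ (with $m>0$) and $j\in\mathbb{N}_0$, $x\in[0,\infty)$, the basis functions are $p_{m,j}(x)=\frac{m^j}{j!}x^je^{-mx}$ if $c=0$, and $p_{m,j}(x)=\frac{m^{c,\overline{j}}}{j!}x^j(1+cx)^{-(\frac{m}{c}+j)}$ if $c>0$. For $n>c$, $\rho>0$, $j\in\mathbb{N}$, $t>0$: $\mu_{n,j,\rho}(t)=\frac{(n\rho)^{j\rho}}{\Gamma(j\rho)}t^{j\rho-1}e^{-n\rho t}$ if $c=0$, and $\mu_{n,j,\rho}(t)=\frac{c^{j\rho}}{B(j\rho,\frac{n}{c}\rho+1)}t^{j\rho-1}(1+ct)^{-(\frac{n}{c}+j)\rho-1}$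 if $c>0$, where $B(x,y)=\Gamma(x)\Gamma(y)/\Gamma(x+y)$ is Euler's Beta function. *)

theory Defs
  imports "HOL-Analysis.Analysis"
begin

definition pfun :: "real \<Rightarrow> real \<Rightarrow> nat \<Rightarrow> real \<Rightarrow> real" where
  "pfun c m j x =
     (if c = 0 then m ^ j / fact j * x ^ j * exp (- m * x)
      else (\<Prod>l<j. m + c * real l) / fact j * x ^ j * (1 + c * x) powr (- (m / c + real j)))"

text \<open>Kernels mu_{n,j,rho}(t) (meant for t > 0).\<close>
definition mu :: "real \<Rightarrow> real \<Rightarrow> nat \<Rightarrow> real \<Rightarrow> real \<Rightarrow> real" where
  "mu c n j \<rho> t =
     (if c = 0 then (n * \<rho>) powr (real j * \<rho>) / Gamma (real j * \<rho>)
                    * t powr (real j * \<rho> - 1) * exp (- n * \<rho> * t)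
      else c powr (real j * \<rho>) / Beta (real j * \<rho>) (n / c * \<rho> + 1)
                    * t powr (real j * \<rho> - 1) * (1 + c * t) powr (- (n / c + real j) * \<rho> - 1))"

definition omega :: "real \<Rightarrow> real \<Rightarrow> nat \<Rightarrow> real \<Rightarrow> real \<Rightarrow> real" where
  "omega c n j \<rho> t =
     (if j = 0 then (LBINT u:{t..}. mu c n 1 \<rho> u)
      else (LBINT u:{0..t}. mu c n j \<rho> u - mu c n (Suc j) \<rho> u))"

end

theory Submission imports Defs "HOL-Real_Asymp.Real_Asymp" begin

definition GG :: "real \<Rightarrow> real \<Rightarrow> nat \<Rightarrow> real \<Rightarrow> real" where
  "GG c m k x = (\<Sum>i<k. pfun c m i x)"

definition QQ :: "real \<Rightarrow> real \<Rightarrow> nat \<Rightarrow> real \<Rightarrow> real" where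
  "QQ c m k x = (if k = 0 then 0 else if c = 0 then m ^ k / fact (k - 1) * x ^ (k - 1) * exp (- m * x)
     else (\<Prod>l<k. m + c * real l) / fact (k - 1) * x ^ (k - 1) * (1 + c * x) powr (- (m / c + real k)))"

lemma fact_aux: "(fact n + fact n * real n :: real) \<noteq> 0"
proof -
  have "(fact n * (1 + real n) :: real) > 0" by simp
  thus ?thesis by (simp add: algebra_simps)
qed

lemma deriv_p0:
  assumes "c = 0"
  shows "(pfun c m k has_real_derivative (QQ c m k x - QQ c m (Suc k) x)) (at x)"
proof -
  have e: "pfun c m k = (\<lambda>x. m ^ k / fact k * x ^ k * exp (- m * x))"
    using assms by (auto simp: pfun_def fun_eq_iff)
  show ?thesis unfolding e
    apply (rule derivative_eq_intros refl | simp)+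
    apply (cases k)
    using assms apply (simp add: QQ_def)
    using assms apply (simp add: QQ_def field_simps)
    apply (subst divide_eq_eq)
    apply (simp add: fact_aux)
    apply (simp add: algebra_simps)
    done
qed

lemma powr_lin_deriv:
  assumes "1 + c * x > 0"
  shows "((\<lambda>x. (1 + c * x) powr r) has_real_derivative (r * (1 + c * x) powr (r - 1) * c)) (at x)"
proof -
  have a: "((\<lambda>z. z powr r) has_real_derivative r * (1 + c * x) powr (r - 1)) (at (1 + c * x))"
    by (rule has_real_derivative_powr[OF assms])
  have b: "((\<lambda>x. 1 + c * x) has_real_derivative c) (at x)"
    by (auto intro!: derivative_eq_intros)
  show ?thesis using DERIV_chain2[OF a b] by simp
qed

lemma alg: "F \<noteq> 0 \<Longrightarrow> (J::real) \<noteq> 0 \<Longrightarrow> y \<noteq> 0 \<Longrightarrow>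
  P / (F * J) * (J * X * w + (- e * (w / y) * c) * (x * X)) = P / F * X * w - P * (e * c) / (F * J) * (x * X) * (w / y)"
  by (simp add: field_simps)

lemma deriv_pc:
  assumes "c > 0" "1 + c * x > 0"
  shows "(pfun c m k has_real_derivative (QQ c m k x - QQ c m (Suc k) x)) (at x)"
proof -
  define P where "P = (\<Prod>l<k. m + c * real l)"
  define e where "e = m / c + real k"
  define y where "y = 1 + c * x"
  define w where "w = y powr (- e)"
  have e: "pfun c m k = (\<lambda>x. P / fact k * (x ^ k * (1 + c * x) powr (- e)))"
    using assms by (auto simp: pfun_def fun_eq_iff P_def e_def)
  have y: "y > 0" using assms y_def by simp
  have pw: "(1 + c * x) powr (- e - 1) = w / y"
    using y by (simp add: powr_diff w_def y_def)
  have d: "((\<lambda>x. x ^ k * (1 + c * x) powr (- e)) has_real_derivative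
       (real k * x ^ (k - 1) * w + (- e * (w / y) * c) * x ^ k)) (at x)"
    using DERIV_mult[OF DERIV_pow[of k x] powr_lin_deriv[OF assms(2), of "-e"]]
    by (simp add: pw w_def y_def)
  have d2: "(pfun c m k has_real_derivative P / fact k * (real k * x ^ (k - 1) * w + (- e * (w / y) * c) * x ^ k)) (at x)"
    unfolding e by (rule DERIV_cmult[OF d])
  have q1: "QQ c m (Suc k) x = P * (m + c * real k) / fact k * x ^ k * (w / y)"
  proof -
    have "- (m / c + real (Suc k)) = - e - 1" by (simp add: e_def)
    hence "(1 + c * x) powr (- (m / c + real (Suc k))) = (1 + c * x) powr (- e - 1)"
      by metis
    thus ?thesis using assms by (simp add: QQ_def P_def pw)
  qed
  have ec: "e * c = m + c * real k" using assms by (simp add: e_def field_simps)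
  show ?thesis
  proof (cases k)
    case 0
    have ec0: "e * c = m" using ec 0 by simp
    have "P / fact k * (real k * x ^ (k - 1) * w + (- e * (w / y) * c) * x ^ k)
       = QQ c m k x - QQ c m (Suc k) x"
    proof -
      have z: "QQ c m k x = 0" using 0 by (simp add: QQ_def)
      show ?thesis unfolding q1 z using 0 by (simp add: ec0[symmetric] mult_ac)
    qed
    then show ?thesis using d2 by simp
  next
    case (Suc j)
    have q0: "QQ c m k x = P / fact j * x ^ j * w"
      using assms Suc by (simp add: QQ_def P_def w_def y_def e_def)
    have "P / fact k * (real k * x ^ (k - 1) * w + (- e * (w / y) * c) * x ^ k)
       = QQ c m k x - QQ c m (Suc k) x"
    proof -
      have d1: "y * fact j + y * (fact j * real j) \<noteq> 0"
        using y fact_aux[of j] by (simp add: distrib_left[symmetric])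
      have fk: "fact k = fact j * (1 + real j)" using Suc by (simp add: algebra_simps)
      have rk: "real k = 1 + real j" using Suc by simp
      have xk: "x ^ k = x * x ^ j" "k - 1 = j" using Suc by simp_all
      have fj: "(fact j :: real) \<noteq> 0" by simp
      have J: "1 + real j \<noteq> 0" by (simp add: add_pos_nonneg)
      have q1': "QQ c m (Suc k) x = P * (e * c) / fact k * x ^ k * (w / y)" using q1 ec by simp
      show ?thesis unfolding q0 q1' fk rk xk
        using alg[OF fj J, of y P "x ^ j" w e c x] y by simp
    qed
    then show ?thesis using d2 by simp
  qed
qed

lemma deriv_p:
  assumes "c \<ge> 0" "1 + c * x > 0"
  shows "(pfun c m k has_real_derivative (QQ c m k x - QQ c m (Suc k) x)) (at x)"
  using assms deriv_p0 deriv_pc by (cases "c = 0") auto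

lemma deriv_G:
  assumes "c \<ge> 0" "1 + c * x > 0"
  shows "(GG c m k has_real_derivative (- QQ c m k x)) (at x)"
proof (induction k)
  case 0
  then show ?case by (simp add: GG_def QQ_def)
next
  case (Suc k)
  have e: "GG c m (Suc k) = (\<lambda>x. GG c m k x + pfun c m k x)"
    by (simp add: GG_def fun_eq_iff)
  show ?case unfolding e using DERIV_add[OF Suc deriv_p[OF assms, of m k]] by simp
qed

lemma G0: "k \<ge> 1 \<Longrightarrow> GG c m k 0 = 1"
proof (induction k rule: dec_induct)
  case base
  then show ?case by (simp add: GG_def pfun_def)
next
  case (step k)
  then show ?case by (simp add: GG_def pfun_def)
qed

lemma p_lim:
  assumes "c \<ge> 0" "m > 0"
  shows "((\<lambda>x. pfun c m i x) \<longlongrightarrow> 0) at_top"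
proof (cases "c = 0")
  case True
  have "((\<lambda>x. m ^ i / fact i * (x ^ i * exp (- m * x))) \<longlongrightarrow> 0) at_top"
    using assms by real_asymp
  then show ?thesis using True by (simp add: pfun_def mult.assoc)
next
  case False
  hence c: "c > 0" using assms by simp
  define a where "a = m / c"
  have a: "a > 0" using c assms by (simp add: a_def)
  have l1: "((\<lambda>x. (x / (1 + c * x)) ^ i) \<longlongrightarrow> inverse c ^ i) at_top"
    using c by real_asymp
  have l2: "((\<lambda>x. (1 + c * x) powr (- a)) \<longlongrightarrow> 0) at_top"
    using c a by real_asymp
  have l3: "((\<lambda>x. (\<Prod>l<i. m + c * real l) / fact i * ((x / (1 + c * x)) ^ i * (1 + c * x) powr (- a))) \<longlongrightarrow> 0) at_top"
    using tendsto_mult_right_zero[OF tendsto_mult[OF l1 l2, simplified], of "(\<Prod>l<i. m + c * real l) / fact i"] .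
  have ev: "eventually (\<lambda>x. (\<Prod>l<i. m + c * real l) / fact i * ((x / (1 + c * x)) ^ i * (1 + c * x) powr (- a)) = pfun c m i x) at_top"
  proof (rule eventually_mono[OF eventually_ge_at_top[of 0]])
    fix x :: real assume x: "x \<ge> 0"
    have y: "1 + c * x > 0" using x c by (simp add: add_pos_nonneg)
    have "(1 + c * x) powr (- (m / c + real i)) = (1 + c * x) powr (- a) / (1 + c * x) ^ i"
    proof -
      have "- (m / c + real i) = - a - real i" by (simp add: a_def)
      hence "(1 + c * x) powr (- (m / c + real i)) = (1 + c * x) powr (- a) / (1 + c * x) powr (real i)"
        by (simp add: powr_diff)
      also have "(1 + c * x) powr (real i) = (1 + c * x) ^ i" using y by (rule powr_realpow)
      finally show ?thesis .
    qed
    thus "(\<Prod>l<i. m + c * real l) / fact i * ((x / (1 + c * x)) ^ i * (1 + c * x) powr (- a)) = pfun c m i x"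
      using False by (simp add: pfun_def power_divide)
  qed
  show ?thesis using tendsto_cong[OF ev] l3 by simp
qed

lemma G_lim:
  assumes "c \<ge> 0" "m > 0"
  shows "(GG c m k \<longlongrightarrow> 0) at_top"
proof -
  have "((\<lambda>x. \<Sum>i<k. pfun c m i x) \<longlongrightarrow> (\<Sum>i<k. 0)) at_top"
    by (rule tendsto_sum) (use p_lim[OF assms] in auto)
  thus ?thesis by (simp add: GG_def[abs_def])
qed

lemma mu_eq:
  assumes "c \<ge> 0" "n > c" "\<rho> \<ge> 1" "j \<ge> 1" "t > 0"
  shows "mu c n j (real \<rho>) t = QQ c (n * real \<rho> + c) (j * \<rho>) t"
proof -
  have "j * \<rho> > 0" using assms by simp
  then obtain k' where kk: "j * \<rho> = Suc k'" using not0_implies_Suc by blast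
  have rk: "real j * real \<rho> = real (Suc k')" using kk by (metis of_nat_mult)
  have rk1: "real j * real \<rho> = 1 + real k'" using rk by simp
  have G: "Gamma (real j * real \<rho>) = fact k'" using rk1 Gamma_fact[of k'] by simp
  have tp: "t powr (real j * real \<rho> - 1) = t ^ k'" using rk1 assms by (simp add: powr_realpow)
  have np: "n * real \<rho> > 0" using assms by simp
  show ?thesis
  proof (cases "c = 0")
    case True
    have "(n * real \<rho>) powr (real j * real \<rho>) = (n * real \<rho>) ^ Suc k'"
      unfolding rk using np by (rule powr_realpow)
    then show ?thesis using True kk G tp by (simp add: mu_def QQ_def)
  next
    case False
    hence c: "c > 0" using assms by simp
    define b where "b = n / c * real \<rho> + 1"
    have b: "b > 0" using c np assms by (simp add: b_def add_pos_nonneg)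
    have cp: "c powr (real j * real \<rho>) = c ^ Suc k'" unfolding rk using c by (rule powr_realpow)
    have Be: "Beta (real j * real \<rho>) b = fact k' * Gamma b / Gamma (b + real (Suc k'))"
      using G rk by (simp add: Beta_def add.commute)
    have pr: "(\<Prod>l<Suc k'. n * real \<rho> + c + c * real l) = c ^ Suc k' * pochhammer b (Suc k')"
    proof -
      have "(\<Prod>l<Suc k'. n * real \<rho> + c + c * real l) = (\<Prod>l<Suc k'. c * (b + real l))"
        using c by (intro prod.cong) (auto simp: b_def field_simps)
      also have "\<dots> = c ^ Suc k' * (\<Prod>l<Suc k'. b + real l)"
        by (simp add: prod.distrib)
      also have "(\<Prod>l<Suc k'. b + real l) = pochhammer b (Suc k')"
        by (simp add: pochhammer_prod atLeast0LessThan)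
      finally show ?thesis .
    qed
    have poch: "pochhammer b (Suc k') = Gamma (b + real (Suc k')) / Gamma b"
      using b by (intro pochhammer_Gamma) (auto elim!: nonpos_Ints_cases)
    have ex: "- (n / c + real j) * real \<rho> - 1 = - ((n * real \<rho> + c) / c + real (Suc k'))"
      using c rk by (simp add: field_simps)
    have g1: "Gamma b > 0" using b by (rule Gamma_real_pos)
    have g2: "Gamma (b + real (Suc k')) > 0" using b by (intro Gamma_real_pos) simp
    have bb: "n / c * real \<rho> + 1 = b" by (simp add: b_def)
    have qq: "QQ c (n * real \<rho> + c) (j * \<rho>) t = c ^ Suc k' * (Gamma (b + real (Suc k')) / Gamma b) / fact k' * t ^ k'
       * (1 + c * t) powr (- ((n * real \<rho> + c) / c + real (Suc k')))"
      unfolding QQ_def kk using False by (simp only: Suc_neq_Zero if_False diff_Suc_1 pr poch) simp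
    have mm: "mu c n j (real \<rho>) t = c ^ Suc k' / (fact k' * Gamma b / Gamma (b + real (Suc k'))) * t ^ k'
       * (1 + c * t) powr (- ((n * real \<rho> + c) / c + real (Suc k')))"
      unfolding mu_def using False by (simp only: if_False cp bb Be ex tp)
    show ?thesis unfolding qq mm using g1 g2 by (simp add: field_simps)
  qed
qed

lemma QQ_cont:
  assumes "c \<ge> 0" "1 + c * x > 0"
  shows "isCont (QQ c m k) x"
proof (cases "c = 0")
  case True
  have e: "QQ c m k = (\<lambda>x. if k = 0 then 0 else m ^ k / fact (k - 1) * x ^ (k - 1) * exp (- m * x))"
    using True by (simp add: QQ_def fun_eq_iff)
  show ?thesis unfolding e by (cases "k = 0") (auto intro!: continuous_intros)
next
  case False
  have e: "QQ c m k = (\<lambda>x. if k = 0 then 0 else (\<Prod>l<k. m + c * real l) / fact (k - 1) * x ^ (k - 1) *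
                     (1 + c * x) powr - (m / c + real k))"
    using False by (simp add: QQ_def fun_eq_iff)
  show ?thesis unfolding e using assms by (cases "k = 0") (auto intro!: continuous_intros)
qed

lemma QQ_nonneg:
  assumes "c \<ge> 0" "m > 0" "x > 0"
  shows "QQ c m k x \<ge> 0"
proof -
  have "(\<Prod>l<k. m + c * real l) \<ge> 0" using assms by (intro prod_nonneg) auto
  moreover have "(1 + c * x) powr r \<ge> 0" for r by simp
  ultimately show ?thesis using assms unfolding QQ_def by auto
qed

lemma G_cont_right:
  assumes "c \<ge> 0" "t \<ge> 0"
  shows "(GG c m k \<longlongrightarrow> GG c m k t) (at_right t)"
proof -
  have "1 + c * t > 0" using assms by (simp add: add_pos_nonneg)
  hence "isCont (GG c m k) t" using deriv_G[OF assms(1)] DERIV_isCont by blast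
  thus ?thesis unfolding isCont_def by (rule tendsto_mono[OF at_le, rotated]) simp
qed

lemma ftc_fin:
  assumes "c \<ge> 0" "m > 0" "k \<ge> 1" "t > 0"
  shows "set_integrable lborel {0<..<t} (QQ c m k)"
    and "(LBINT x:{0<..<t}. QQ c m k x) = 1 - GG c m k t"
proof -
  have ei: "einterval (ereal 0) (ereal t) = {0<..<t}" by (auto simp: einterval_def)
  have F: "\<And>x. ereal 0 < ereal x \<Longrightarrow> ereal x < ereal t \<Longrightarrow> DERIV (\<lambda>x. - GG c m k x) x :> QQ c m k x"
  proof -
    fix x assume "ereal 0 < ereal x" "ereal x < ereal t"
    hence "1 + c * x > 0" using assms by (simp add: add_pos_nonneg)
    thus "DERIV (\<lambda>x. - GG c m k x) x :> QQ c m k x"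
      using DERIV_minus[OF deriv_G[OF assms(1)]] by simp
  qed
  have f: "\<And>x. ereal 0 < ereal x \<Longrightarrow> ereal x < ereal t \<Longrightarrow> isCont (QQ c m k) x"
    using assms by (intro QQ_cont) (auto simp: add_pos_nonneg)
  have nn: "AE x in lborel. ereal 0 < ereal x \<longrightarrow> ereal x < ereal t \<longrightarrow> 0 \<le> QQ c m k x"
    using assms by (intro AE_I2) (auto intro: QQ_nonneg)
  have A: "(((\<lambda>x. - GG c m k x) \<circ> real_of_ereal) \<longlongrightarrow> - 1) (at_right (ereal 0))"
    unfolding ereal_tendsto_simps1 using tendsto_minus[OF G_cont_right[OF assms(1), of 0 m k]] G0[OF assms(3)]
    by simp
  have B: "(((\<lambda>x. - GG c m k x) \<circ> real_of_ereal) \<longlongrightarrow> - GG c m k t) (at_left (ereal t))"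
  proof -
    have "1 + c * t > 0" using assms by (simp add: add_pos_nonneg)
    hence "isCont (\<lambda>x. - GG c m k x) t" using DERIV_isCont[OF DERIV_minus[OF deriv_G[OF assms(1)]]] by blast
    thus ?thesis unfolding ereal_tendsto_simps1 isCont_def by (rule tendsto_mono[OF at_le, rotated]) simp
  qed
  note R = interval_integral_FTC_nonneg[OF _ F f nn A B]
  show "set_integrable lborel {0<..<t} (QQ c m k)" using R(1) assms by (simp add: ei)
  have "(LBINT x=ereal 0..ereal t. QQ c m k x) = 1 - GG c m k t" using R(2) assms by simp
  thus "(LBINT x:{0<..<t}. QQ c m k x) = 1 - GG c m k t"
    using assms by (simp add: interval_integral_Ioo)
qed

lemma ftc_inf:
  assumes "c \<ge> 0" "m > 0" "t \<ge> 0"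
  shows "set_integrable lborel {t<..} (QQ c m k)"
    and "(LBINT x:{t<..}. QQ c m k x) = GG c m k t"
proof -
  have ei: "einterval (ereal t) \<infinity> = {t<..}" by (auto simp: einterval_def)
  have F: "\<And>x. ereal t < ereal x \<Longrightarrow> ereal x < \<infinity> \<Longrightarrow> DERIV (\<lambda>x. - GG c m k x) x :> QQ c m k x"
  proof -
    fix x assume "ereal t < ereal x" "ereal x < \<infinity>"
    hence "1 + c * x > 0" using assms by (simp add: add_pos_nonneg)
    thus "DERIV (\<lambda>x. - GG c m k x) x :> QQ c m k x"
      using DERIV_minus[OF deriv_G[OF assms(1)]] by simp
  qed
  have f: "\<And>x. ereal t < ereal x \<Longrightarrow> ereal x < \<infinity> \<Longrightarrow> isCont (QQ c m k) x"
    using assms by (intro QQ_cont) (auto simp: add_pos_nonneg)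
  have nn: "AE x in lborel. ereal t < ereal x \<longrightarrow> ereal x < \<infinity> \<longrightarrow> 0 \<le> QQ c m k x"
    using assms by (intro AE_I2) (auto intro: QQ_nonneg)
  have A: "(((\<lambda>x. - GG c m k x) \<circ> real_of_ereal) \<longlongrightarrow> - GG c m k t) (at_right (ereal t))"
    unfolding ereal_tendsto_simps1 using tendsto_minus[OF G_cont_right[OF assms(1,3), of m k]]
    by simp
  have B: "(((\<lambda>x. - GG c m k x) \<circ> real_of_ereal) \<longlongrightarrow> - 0) (at_left \<infinity>)"
    unfolding ereal_tendsto_simps1 using tendsto_minus[OF G_lim[OF assms(1,2), of k]] by simp
  note R = interval_integral_FTC_nonneg[OF _ F f nn A B]
  show "set_integrable lborel {t<..} (QQ c m k)" using R(1) by (simp add: ei)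
  have "(LBINT x=ereal t..\<infinity>. QQ c m k x) = GG c m k t" using R(2) by simp
  thus "(LBINT x:{t<..}. QQ c m k x) = GG c m k t"
    by (simp add: interval_integral_Ioi)
qed

lemma GG_add: "GG c m (a + r) t = GG c m a t + (\<Sum>i<r. pfun c m (i + a) t)"
  by (induction r) (simp_all add: GG_def add.commute)

lemma pfun_zero: "k \<ge> 1 \<Longrightarrow> pfun c m k 0 = 0"
  by (simp add: pfun_def)

theorem lemma1:
  fixes c n t :: real and \<rho> j :: nat
  assumes "c \<ge> 0" and "n > c" and "\<rho> \<ge> 1" and "t \<ge> 0"
  shows "omega c n j (real \<rho>) t = (\<Sum>i<\<rho>. pfun c (n * real \<rho> + c) (i + j * \<rho>) t)"
proof -
  define m where "m = n * real \<rho> + c"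
  have m: "m > 0" using assms by (simp add: m_def add_pos_nonneg)
  show ?thesis
  proof (cases "j = 0")
    case True
    have "omega c n j (real \<rho>) t = (LBINT u:{t..}. mu c n 1 (real \<rho>) u)"
      using True by (simp add: omega_def)
    also have "\<dots> = (LBINT u:{t<..}. mu c n 1 (real \<rho>) u)"
      by (rule set_integral_discrete_difference[where X="{t}"]) auto
    also have "\<dots> = (LBINT u:{t<..}. QQ c m \<rho> u)"
    proof (rule set_lebesgue_integral_cong)
      show "\<forall>x. x \<in> {t<..} \<longrightarrow> mu c n 1 (real \<rho>) x = QQ c m \<rho> x"
      proof (intro allI impI)
        fix x assume "x \<in> {t<..}"
        hence "x > 0" using assms by simp
        thus "mu c n 1 (real \<rho>) x = QQ c m \<rho> x"
          using mu_eq[OF assms(1,2,3), of 1 x] by (simp add: m_def)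
      qed
    qed simp
    also have "\<dots> = GG c m \<rho> t" using ftc_inf(2)[OF assms(1) m assms(4)] .
    finally show ?thesis using True by (simp add: GG_def m_def)
  next
    case False
    hence j: "j \<ge> 1" by simp
    show ?thesis
    proof (cases "t = 0")
      case True
      have "omega c n j (real \<rho>) t = (LBINT u:{}. mu c n j (real \<rho>) u - mu c n (Suc j) (real \<rho>) u)"
        unfolding omega_def using False True
        by (simp only: if_False) (rule set_integral_discrete_difference[where X="{0}"]; auto)
      also have "\<dots> = 0" by (simp add: set_lebesgue_integral_def)
      moreover have "pfun c (n * real \<rho> + c) (i + j * \<rho>) 0 = 0" for i
        using j assms by (intro pfun_zero) (simp add: Suc_le_eq)
      ultimately show ?thesis using True by simp
    next
      case tF: False
      hence t: "t > 0" using assms by simp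
      have eq: "\<And>u. u \<in> {0<..<t} \<Longrightarrow> mu c n j (real \<rho>) u - mu c n (Suc j) (real \<rho>) u
                 = QQ c m (j * \<rho>) u - QQ c m (Suc j * \<rho>) u"
        using assms j by (auto simp: m_def mu_eq)
      have i1: "set_integrable lborel {0<..<t} (QQ c m (j * \<rho>))"
        using ftc_fin(1)[OF assms(1) m _ t, of "j * \<rho>"] j assms by simp
      have i2: "set_integrable lborel {0<..<t} (QQ c m (Suc j * \<rho>))"
        using ftc_fin(1)[OF assms(1) m _ t, of "Suc j * \<rho>"] j assms by simp
      have "omega c n j (real \<rho>) t = (LBINT u:{0..t}. mu c n j (real \<rho>) u - mu c n (Suc j) (real \<rho>) u)"
        using False by (simp add: omega_def)
      also have "\<dots> = (LBINT u:{0<..<t}. mu c n j (real \<rho>) u - mu c n (Suc j) (real \<rho>) u)"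
        by (rule set_integral_discrete_difference[where X="{0, t}"]) auto
      also have "\<dots> = (LBINT u:{0<..<t}. QQ c m (j * \<rho>) u - QQ c m (Suc j * \<rho>) u)"
        by (rule set_lebesgue_integral_cong) (auto simp: eq)
      also have "\<dots> = (LBINT u:{0<..<t}. QQ c m (j * \<rho>) u) - (LBINT u:{0<..<t}. QQ c m (Suc j * \<rho>) u)"
        by (rule set_integral_diff(2)[OF i1 i2])
      also have "\<dots> = (1 - GG c m (j * \<rho>) t) - (1 - GG c m (Suc j * \<rho>) t)"
        using ftc_fin(2)[OF assms(1) m _ t, of "j * \<rho>"] ftc_fin(2)[OF assms(1) m _ t, of "Suc j * \<rho>"] j assms
        by simp
      also have "\<dots> = (\<Sum>i<\<rho>. pfun c m (i + j * \<rho>) t)"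
        using GG_add[of c m "j * \<rho>" \<rho> t] by (simp add: add.commute)
      finally show ?thesis by (simp add: m_def)
    qed
  qed
qed

end
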